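(* Let $n\geq1$ and let $F:\mathbb{C}\to\mathbb{C}$ be additive. Then $F$ satisfies $$F(\alpha^{n+1})=\sum_{i=1}^{n}\binom{n+1}{i}(-1)^{n-i}\,\alpha^{n+1-i}\,F(\alpha^i)\quad\text{for all }\alpha\in\mathbb{C}$$ if and only if for all $x_1,\ldots,x_{n+1}\in\mathbb{C}$ $$F(x_1\cdots x_{n+1})=\sum_{k=1}^{n}(-1)^{k+1}\sum_{1\leq i_1<\cdots<i_k\leq n+1}x_{i_1}\cdots x_{i_k}\,F\big(x_1\cdots\widehat{x_{i_1}}\cdots\widehat{x_{i_k}}\cdots x_{n+1}\big),$$ where $\widehat{x_j}$ means that the factor $x_j$ is omitted. *)

theory Defs
  imports Complex_Main
begin

definition additive_fun :: "(complex \<Rightarrow> complex) \<Rightarrow> bool" where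
  "additive_fun F \<longleftrightarrow> (\<forall>x y. F (x + y) = F x + F y)"

end

theory Submission
  imports Defs "HOL-Computational_Algebra.Polynomial"
begin

lemma homog:
  fixes \<Phi> :: "(nat \<Rightarrow> complex) \<Rightarrow> complex"
  assumes add: "\<And>x j a b. j \<in> I \<Longrightarrow> \<Phi> (x(j:=a+b)) = \<Phi> (x(j:=a)) + \<Phi> (x(j:=b))"
    and j: "j \<in> I"
  shows "\<Phi> (x(j:= of_nat q * a)) = of_nat q * \<Phi> (x(j:=a))"
proof (induction q)
  case 0
  have "\<Phi> (x(j:=0+0)) = \<Phi> (x(j:=0)) + \<Phi> (x(j:=0))" using add j by blast
  then have h: "\<Phi> (x(j:=0)) = 0" by simp
  show ?case using h by (metis mult_zero_left of_nat_0)
next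
  case (Suc q)
  have e: "(of_nat (Suc q) :: complex) * a = a + of_nat q * a" by (simp add: algebra_simps)
  have "\<Phi> (x(j:= of_nat (Suc q) * a)) = \<Phi> (x(j:= a + of_nat q * a))"
    by (simp only: e)
  also have "\<dots> = \<Phi> (x(j:=a)) + \<Phi> (x(j:= of_nat q * a))" by (rule add[OF j])
  also have "\<dots> = \<Phi> (x(j:=a)) + of_nat q * \<Phi> (x(j:=a))" by (subst Suc.IH) (rule refl)
  finally show ?case by (simp only: e distrib_right mult_1_left of_nat_Suc add.commute)
qed

lemma expand:
  fixes \<Phi> :: "(nat \<Rightarrow> complex) \<Rightarrow> complex"
  assumes add: "\<And>x j a b. j \<in> I \<Longrightarrow> \<Phi> (x(j:=a+b)) = \<Phi> (x(j:=a)) + \<Phi> (x(j:=b))"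
    and fin: "finite B" and BI: "B \<subseteq> I"
  shows "\<Phi> (\<lambda>j. if j \<in> B then of_nat q * a + b else x j) =
    (\<Sum>T\<in>Pow B. of_nat q ^ card T * \<Phi> (\<lambda>j. if j \<in> T then a else if j \<in> B then b else x j))"
  using fin BI
proof (induction B arbitrary: x rule: finite_induct)
  case empty
  then show ?case by simp
next
  case (insert i B)
  define g where "g T = (\<lambda>j. if j \<in> T then a else if j \<in> B then b else x j)" for T
  have iI: "i \<in> I" using insert by auto
  have "(\<lambda>j. if j \<in> insert i B then of_nat q * a + b else x j)
      = (\<lambda>j. if j \<in> B then of_nat q * a + b else (x(i:= of_nat q * a + b)) j)" by auto
  then have "\<Phi> (\<lambda>j. if j \<in> insert i B then of_nat q * a + b else x j)
     = (\<Sum>T\<in>Pow B. of_nat q ^ card T * \<Phi> (\<lambda>j. if j \<in> T then a else if j \<in> B then b else (x(i:= of_nat q * a + b)) j))"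
    using insert by simp
  also have "\<dots> = (\<Sum>T\<in>Pow B. of_nat q ^ card T * \<Phi> ((g T)(i:= of_nat q * a + b)))"
  proof (rule sum.cong)
    fix T assume "T \<in> Pow B"
    then have "(\<lambda>j. if j \<in> T then a else if j \<in> B then b else (x(i:= of_nat q * a + b)) j) = (g T)(i:= of_nat q * a + b)"
      using insert(2) by (auto simp: g_def fun_eq_iff)
    then show "of_nat q ^ card T * \<Phi> (\<lambda>j. if j \<in> T then a else if j \<in> B then b else (x(i:= of_nat q * a + b)) j) = of_nat q ^ card T * \<Phi> ((g T)(i:= of_nat q * a + b))" by simp
  qed simp
  also have "\<dots> = (\<Sum>T\<in>Pow B. of_nat q ^ card T * \<Phi> ((g T)(i:=b))) + (\<Sum>T\<in>Pow B. of_nat q ^ Suc (card T) * \<Phi> ((g T)(i:=a)))"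
  proof -
    have "\<Phi> ((g T)(i:= of_nat q * a + b)) = of_nat q * \<Phi> ((g T)(i:=a)) + \<Phi> ((g T)(i:=b))" for T
      by (simp only: add[OF iI] homog[OF add iI])
    then show ?thesis by (simp add: sum.distrib algebra_simps)
  qed
  also have "(\<Sum>T\<in>Pow B. of_nat q ^ Suc (card T) * \<Phi> ((g T)(i:=a))) =
     (\<Sum>T\<in>insert i ` Pow B. of_nat q ^ card T * \<Phi> (\<lambda>j. if j \<in> T then a else if j \<in> insert i B then b else x j))"
  proof -
    have inj: "inj_on (insert i) (Pow B)" using insert(2) by (auto simp: inj_on_def)
    show ?thesis
      unfolding sum.reindex[OF inj] o_def
    proof (rule sum.cong[OF refl])
      fix T assume T: "T \<in> Pow B"
      then have fT: "finite T" and iT: "i \<notin> T" using insert(1,2) finite_subset by auto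
      have c: "card (insert i T) = Suc (card T)" using fT iT by simp
      have "(g T)(i:=a) = (\<lambda>j. if j \<in> insert i T then a else if j \<in> insert i B then b else x j)"
        by (auto simp: g_def fun_eq_iff)
      then show "of_nat q ^ Suc (card T) * \<Phi> ((g T)(i := a)) =
         of_nat q ^ card (insert i T) * \<Phi> (\<lambda>j. if j \<in> insert i T then a else if j \<in> insert i B then b else x j)"
        by (simp only: c)
    qed
  qed
  also have "(\<Sum>T\<in>Pow B. of_nat q ^ card T * \<Phi> ((g T)(i:=b))) =
     (\<Sum>T\<in>Pow B. of_nat q ^ card T * \<Phi> (\<lambda>j. if j \<in> T then a else if j \<in> insert i B then b else x j))"
  proof (rule sum.cong[OF refl])
    fix T assume T: "T \<in> Pow B"
    then have "(g T)(i:=b) = (\<lambda>j. if j \<in> T then a else if j \<in> insert i B then b else x j)"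
      using insert(2) by (auto simp: g_def fun_eq_iff)
    then show "of_nat q ^ card T * \<Phi> ((g T)(i := b)) =
         of_nat q ^ card T * \<Phi> (\<lambda>j. if j \<in> T then a else if j \<in> insert i B then b else x j)"
      by simp
  qed
  finally show ?case
    apply (simp only: Pow_insert)
    apply (subst sum.union_disjoint)
    using insert(1,2) by auto
qed

lemma poly_nat_zero:
  fixes d :: "nat \<Rightarrow> complex"
  assumes "\<And>q::nat. (\<Sum>t\<le>s. of_nat q ^ t * d t) = 0"
  shows "t \<le> s \<Longrightarrow> d t = 0"
proof -
  define p where "p = (\<Sum>t\<le>s. monom (d t) t)"
  have ev: "poly p (of_nat q) = 0" for q
    using assms[of q] by (simp add: p_def poly_sum poly_monom mult.commute)
  have "p = 0"
  proof (rule ccontr)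
    assume "p \<noteq> 0"
    then have "finite {x. poly p x = 0}" by (rule poly_roots_finite)
    moreover have "range (of_nat :: nat \<Rightarrow> complex) \<subseteq> {x. poly p x = 0}" using ev by auto
    moreover have "infinite (range (of_nat :: nat \<Rightarrow> complex))"
      using range_inj_infinite[of "of_nat :: nat \<Rightarrow> complex"] by (simp add: inj_on_def)
    ultimately show False using finite_subset by blast
  qed
  moreover assume "t \<le> s"
  then have "coeff p t = d t" by (simp add: p_def coeff_sum coeff_monom)
  ultimately show "d t = 0" by simp
qed

lemma polar:
  fixes \<Phi> :: "(nat \<Rightarrow> complex) \<Rightarrow> complex" and m :: nat
  assumes cong: "\<And>x y. (\<forall>j\<in>{1..m}. x j = y j) \<Longrightarrow> \<Phi> x = \<Phi> y"
    and add: "\<And>x j a b. j \<in> {1..m} \<Longrightarrow> \<Phi> (x(j:=a+b)) = \<Phi> (x(j:=a)) + \<Phi> (x(j:=b))"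
    and sym: "\<And>x \<sigma>. bij_betw \<sigma> {1..m} {1..m} \<Longrightarrow> \<Phi> (x \<circ> \<sigma>) = \<Phi> x"
    and diag: "\<And>c. \<Phi> (\<lambda>_. c) = 0"
  shows "\<Phi> x = 0"
proof -
  have P: "k \<le> m \<Longrightarrow> \<forall>(x::nat\<Rightarrow>complex) b. (\<forall>j. k < j \<and> j \<le> m \<longrightarrow> x j = b) \<longrightarrow> \<Phi> x = 0" for k
  proof (induction k)
    case 0
    show ?case
    proof (intro allI impI)
      fix x :: "nat \<Rightarrow> complex" and b assume "\<forall>j. 0 < j \<and> j \<le> m \<longrightarrow> x j = b"
      then have "\<Phi> x = \<Phi> (\<lambda>_. b)" by (intro cong) auto
      then show "\<Phi> x = 0" using diag by simp
    qed
  next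
    case (Suc k)
    then have IH: "\<forall>(x::nat\<Rightarrow>complex) b. (\<forall>j. k < j \<and> j \<le> m \<longrightarrow> x j = b) \<longrightarrow> \<Phi> x = 0" by simp
    show ?case
    proof (intro allI impI)
      fix x :: "nat \<Rightarrow> complex" and b assume xb: "\<forall>j. Suc k < j \<and> j \<le> m \<longrightarrow> x j = b"
      define p where "p = Suc k"
      define a where "a = x p"
      define B where "B = {p..m}"
      define w where "w T = (\<lambda>j. if j \<in> T then a else if j \<in> B then b else x j)" for T
      have BI: "B \<subseteq> {1..m}" by (auto simp: B_def p_def)
      have fB: "finite B" by (simp add: B_def)
      have pB: "p \<in> B" using Suc.prems by (simp add: B_def p_def)
      have cB: "card B \<ge> 1" using pB fB card_0_eq by fastforce
      have x_eq: "\<Phi> x = \<Phi> (w {p})"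
        by (intro cong) (auto simp: w_def a_def B_def p_def xb)
      have exp0: "(\<Sum>T\<in>Pow B. of_nat q ^ card T * \<Phi> (w T)) = 0" for q :: nat
      proof -
        have "\<Phi> (\<lambda>j. if j \<in> B then of_nat q * a + b else x j) = 0"
          using IH by (auto simp: B_def p_def)
        then show ?thesis using expand[OF add fB BI, of q a b x] by (simp add: w_def)
      qed
      define d where "d t = (\<Sum>T\<in>{T\<in>Pow B. card T = t}. \<Phi> (w T))" for t
      have "(\<Sum>t\<le>card B. of_nat q ^ t * d t) = 0" for q :: nat
      proof -
        have "(\<Sum>t\<le>card B. of_nat q ^ t * d t) = (\<Sum>t\<le>card B. \<Sum>T\<in>{T\<in>Pow B. card T = t}. of_nat q ^ card T * \<Phi> (w T))"
          by (simp add: d_def sum_distrib_left)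
        also have "\<dots> = (\<Sum>T\<in>Pow B. of_nat q ^ card T * \<Phi> (w T))"
          by (rule sum.group) (auto simp: fB card_mono)
        finally show ?thesis using exp0 by simp
      qed
      then have d1: "d 1 = 0" using poly_nat_zero cB by blast
      have "{T\<in>Pow B. card T = 1} = (\<lambda>j. {j}) ` B" by (auto simp: card_1_singleton_iff)
      then have "d 1 = (\<Sum>j\<in>B. \<Phi> (w {j}))" by (simp add: d_def sum.reindex)
      also have "\<dots> = (\<Sum>j\<in>B. \<Phi> (w {p}))"
      proof (rule sum.cong[OF refl])
        fix j assume jB: "j \<in> B"
        define \<sigma> where "\<sigma> i = (if i = j then p else if i = p then j else i)" for i
        have bij: "bij_betw \<sigma> {1..m} {1..m}"
          by (rule bij_betw_byWitness[where f'=\<sigma>]) (use jB pB BI in \<open>auto simp: \<sigma>_def\<close>)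
        have "w {j} \<circ> \<sigma> = w {p}" using jB pB by (auto simp: fun_eq_iff \<sigma>_def w_def)
        then show "\<Phi> (w {j}) = \<Phi> (w {p})" using sym[OF bij, of "w {j}"] by simp
      qed
      finally have "of_nat (card B) * \<Phi> (w {p}) = 0" using d1 by simp
      then show "\<Phi> x = 0" using cB x_eq by simp
    qed
  qed
  show ?thesis using P[of m] by force
qed


definition Rhs :: "(complex \<Rightarrow> complex) \<Rightarrow> nat \<Rightarrow> (nat \<Rightarrow> complex) \<Rightarrow> complex" where
  "Rhs F n x = (\<Sum>k=1..n. (-1) ^ (k + 1) *
               (\<Sum>S\<in>{S. S \<subseteq> {1..n+1} \<and> card S = k}.
                  (\<Prod>j\<in>S. x j) * F (\<Prod>j\<in>{1..n+1} - S. x j)))"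

lemma prod_upd:
  fixes x :: "nat \<Rightarrow> complex"
  assumes "finite A"
  shows "(\<Prod>j\<in>A. if j = i then v else x j) = (if i \<in> A then v * (\<Prod>j\<in>A-{i}. x j) else (\<Prod>j\<in>A. x j))"
proof (cases "i \<in> A")
  case True
  have "(\<Prod>j\<in>A. if j = i then v else x j) = (if i = i then v else x i) * (\<Prod>j\<in>A-{i}. if j = i then v else x j)"
    by (rule prod.remove[OF assms True])
  also have "(\<Prod>j\<in>A-{i}. if j = i then v else x j) = (\<Prod>j\<in>A-{i}. x j)" by (rule prod.cong) auto
  finally show ?thesis using True by simp
next
  case False
  then show ?thesis by (auto intro: prod.cong)
qed

lemma term_add:
  fixes x :: "nat \<Rightarrow> complex"
  assumes F: "additive_fun F" and fA: "finite A" and SA: "S \<subseteq> A" and iA: "i \<in> A"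
  shows "(\<Prod>j\<in>S. (x(i:=a+b)) j) * F (\<Prod>j\<in>A-S. (x(i:=a+b)) j) =
     (\<Prod>j\<in>S. (x(i:=a)) j) * F (\<Prod>j\<in>A-S. (x(i:=a)) j) + (\<Prod>j\<in>S. (x(i:=b)) j) * F (\<Prod>j\<in>A-S. (x(i:=b)) j)"
proof -
  have fS: "finite S" using fA SA finite_subset by blast
  have fD: "finite (A - S)" using fA by simp
  show ?thesis
  proof (cases "i \<in> S")
    case True
    then show ?thesis by (simp add: prod_upd[OF fS] prod_upd[OF fD] algebra_simps)
  next
    case False
    then have "i \<in> A - S" using iA by simp
    then show ?thesis using F by (simp add: prod_upd[OF fS] prod_upd[OF fD] algebra_simps additive_fun_def)
  qed
qed

lemma Rhs_add:
  assumes F: "additive_fun F" and i: "i \<in> {1..n+1}"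
  shows "Rhs F n (x(i:=a+b)) = Rhs F n (x(i:=a)) + Rhs F n (x(i:=b))"
proof -
  have inner: "(\<Sum>S\<in>{S. S \<subseteq> {1..n+1} \<and> card S = k}. (\<Prod>j\<in>S. (x(i:=a+b)) j) * F (\<Prod>j\<in>{1..n+1} - S. (x(i:=a+b)) j))
    = (\<Sum>S\<in>{S. S \<subseteq> {1..n+1} \<and> card S = k}. (\<Prod>j\<in>S. (x(i:=a)) j) * F (\<Prod>j\<in>{1..n+1} - S. (x(i:=a)) j))
    + (\<Sum>S\<in>{S. S \<subseteq> {1..n+1} \<and> card S = k}. (\<Prod>j\<in>S. (x(i:=b)) j) * F (\<Prod>j\<in>{1..n+1} - S. (x(i:=b)) j))" for k
    unfolding sum.distrib[symmetric]
    by (rule sum.cong[OF refl]) (rule term_add[OF F _ _ i], auto)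
  show ?thesis unfolding Rhs_def inner by (simp only: distrib_left sum.distrib)
qed

lemma Rhs_cong:
  assumes "\<forall>j\<in>{1..n+1}. x j = y j"
  shows "Rhs F n x = Rhs F n y"
  unfolding Rhs_def
proof (intro sum.cong refl arg_cong2[where f="(*)"])
  fix S k assume "S \<in> {S. S \<subseteq> {1..n+1} \<and> card S = k}"
  then have S: "S \<subseteq> {1..n+1}" by simp
  show "(\<Prod>j\<in>S. x j) = (\<Prod>j\<in>S. y j)" using S assms by (intro prod.cong) auto
  show "F (\<Prod>j\<in>{1..n+1} - S. x j) = F (\<Prod>j\<in>{1..n+1} - S. y j)" using assms by (intro arg_cong[where f=F] prod.cong) auto
qed

lemma Rhs_sym:
  assumes bij: "bij_betw \<sigma> {1..n+1} {1..n+1}"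
  shows "Rhs F n (x \<circ> \<sigma>) = Rhs F n x"
proof -
  let ?I = "{1..n+1::nat}"
  define t where "t S = (\<Prod>j\<in>S. x j) * F (\<Prod>j\<in>?I - S. x j)" for S
  have inj: "inj_on \<sigma> ?I" using bij by (simp add: bij_betw_def)
  have t\<sigma>: "(\<Prod>j\<in>S. (x\<circ>\<sigma>) j) * F (\<Prod>j\<in>?I - S. (x\<circ>\<sigma>) j) = t (\<sigma> ` S)" if S: "S \<subseteq> ?I" for S
  proof -
    have "(\<Prod>j\<in>\<sigma>`S. x j) = (\<Prod>j\<in>S. (x\<circ>\<sigma>) j)"
      by (rule prod.reindex) (use inj S inj_on_subset in blast)
    moreover have "(\<Prod>j\<in>\<sigma>`(?I - S). x j) = (\<Prod>j\<in>?I - S. (x\<circ>\<sigma>) j)"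
      by (rule prod.reindex) (use inj inj_on_subset in blast)
    moreover have "\<sigma>`(?I - S) = ?I - \<sigma>`S"
      using inj_on_image_set_diff[OF inj, of ?I S] S bij by (simp add: bij_betw_def)
    ultimately show ?thesis by (simp add: t_def)
  qed
  have k: "(\<Sum>S\<in>{S. S \<subseteq> ?I \<and> card S = k}. (\<Prod>j\<in>S. (x\<circ>\<sigma>) j) * F (\<Prod>j\<in>?I - S. (x\<circ>\<sigma>) j))
     = (\<Sum>S\<in>{S. S \<subseteq> ?I \<and> card S = k}. t S)" for k
  proof -
    have e: "{S. S \<subseteq> ?I \<and> card S = k} = {S\<in>Pow ?I. card S = k}" by auto
    have "(\<Sum>S\<in>{S. S \<subseteq> ?I \<and> card S = k}. (\<Prod>j\<in>S. (x\<circ>\<sigma>) j) * F (\<Prod>j\<in>?I - S. (x\<circ>\<sigma>) j))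
       = (\<Sum>S\<in>Pow ?I. if card S = k then (\<Prod>j\<in>S. (x\<circ>\<sigma>) j) * F (\<Prod>j\<in>?I - S. (x\<circ>\<sigma>) j) else 0)"
      unfolding e by (rule sum.inter_filter) simp
    also have "\<dots> = (\<Sum>S\<in>Pow ?I. (\<lambda>S'. if card S' = k then t S' else 0) (\<sigma> ` S))"
    proof (rule sum.cong[OF refl])
      fix S assume S: "S \<in> Pow ?I"
      then have "card (\<sigma> ` S) = card S" using inj inj_on_subset card_image by blast
      then show "(if card S = k then (\<Prod>j\<in>S. (x\<circ>\<sigma>) j) * F (\<Prod>j\<in>?I - S. (x\<circ>\<sigma>) j) else 0) =
        (\<lambda>S'. if card S' = k then t S' else 0) (\<sigma> ` S)" using t\<sigma> S by auto
    qed
    also have "\<dots> = (\<Sum>S\<in>Pow ?I. if card S = k then t S else 0)"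
      by (rule sum.reindex_bij_betw[OF bij_betw_image_Pow[OF bij]])
    also have "\<dots> = (\<Sum>S\<in>{S. S \<subseteq> ?I \<and> card S = k}. t S)"
      unfolding e by (rule sum.inter_filter[symmetric]) simp
    finally show ?thesis .
  qed
  show ?thesis unfolding Rhs_def k t_def by simp
qed

lemma Rhs_diag:
  assumes "n \<ge> 1"
  shows "Rhs F n (\<lambda>_. \<alpha>) = (\<Sum>i=1..n. of_nat ((n + 1) choose i) * (-1) ^ (n - i) * \<alpha> ^ (n + 1 - i) * F (\<alpha> ^ i))"
proof -
  let ?I = "{1..n+1::nat}"
  have inner: "(\<Sum>S\<in>{S. S \<subseteq> ?I \<and> card S = k}. (\<Prod>j\<in>S. \<alpha>) * F (\<Prod>j\<in>?I - S. \<alpha>))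
      = of_nat ((n+1) choose k) * (\<alpha> ^ k * F (\<alpha> ^ (n + 1 - k)))" for k
  proof -
    have "(\<Sum>S\<in>{S. S \<subseteq> ?I \<and> card S = k}. (\<Prod>j\<in>S. \<alpha>) * F (\<Prod>j\<in>?I - S. \<alpha>))
       = (\<Sum>S\<in>{S. S \<subseteq> ?I \<and> card S = k}. \<alpha> ^ k * F (\<alpha> ^ (n + 1 - k)))"
    proof (rule sum.cong[OF refl])
      fix S assume "S \<in> {S. S \<subseteq> ?I \<and> card S = k}"
      then have S: "S \<subseteq> ?I" "card S = k" by auto
      then have "card (?I - S) = n + 1 - k" using card_Diff_subset[OF finite_subset[OF S(1)] S(1)] by simp
      then show "(\<Prod>j\<in>S. \<alpha>) * F (\<Prod>j\<in>?I - S. \<alpha>) = \<alpha> ^ k * F (\<alpha> ^ (n + 1 - k))" using S by simp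
    qed
    also have "\<dots> = of_nat ((n+1) choose k) * (\<alpha> ^ k * F (\<alpha> ^ (n + 1 - k)))"
      using n_subsets[of ?I k] by simp
    finally show ?thesis .
  qed
  have "Rhs F n (\<lambda>_. \<alpha>) = (\<Sum>k=1..n. (-1) ^ (k + 1) * (of_nat ((n+1) choose k) * (\<alpha> ^ k * F (\<alpha> ^ (n + 1 - k)))))"
    unfolding Rhs_def inner ..
  also have "\<dots> = (\<Sum>i=1..n. (-1) ^ (n + 1 - i + 1) * (of_nat ((n+1) choose (n + 1 - i)) * (\<alpha> ^ (n + 1 - i) * F (\<alpha> ^ (n + 1 - (n + 1 - i))))))"
    by (rule sum.reindex_bij_witness[of _ "\<lambda>i. n+1-i" "\<lambda>i. n+1-i"]) auto
  also have "\<dots> = (\<Sum>i=1..n. of_nat ((n + 1) choose i) * (-1) ^ (n - i) * \<alpha> ^ (n + 1 - i) * F (\<alpha> ^ i))"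
  proof (rule sum.cong[OF refl])
    fix i assume i: "i \<in> {1..n}"
    have e1: "n + 1 - i + 1 = (n - i) + 2" using i by auto
    have e2: "n + 1 - (n + 1 - i) = i" using i by auto
    have e3: "(n+1) choose (n + 1 - i) = (n+1) choose i" using i by (simp add: binomial_symmetric[symmetric])
    show "(-1) ^ (n + 1 - i + 1) * (of_nat ((n+1) choose (n + 1 - i)) * (\<alpha> ^ (n + 1 - i) * F (\<alpha> ^ (n + 1 - (n + 1 - i)))))
      = of_nat ((n + 1) choose i) * (-1) ^ (n - i) * \<alpha> ^ (n + 1 - i) * F (\<alpha> ^ i)"
      unfolding e1 e2 e3 by (simp add: power_add)
  qed
  finally show ?thesis .
qed

theorem mainTheorem8:
  fixes F :: "complex \<Rightarrow> complex" and n :: nat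
  assumes "n \<ge> 1" and "additive_fun F"
  shows "(\<forall>\<alpha>::complex. F (\<alpha> ^ (n + 1)) =
            (\<Sum>i=1..n. of_nat ((n + 1) choose i) * (-1) ^ (n - i) * \<alpha> ^ (n + 1 - i) * F (\<alpha> ^ i)))
         \<longleftrightarrow>
         (\<forall>x :: nat \<Rightarrow> complex. F (\<Prod>j\<in>{1..n+1}. x j) =
            (\<Sum>k=1..n. (-1) ^ (k + 1) *
               (\<Sum>S\<in>{S. S \<subseteq> {1..n+1} \<and> card S = k}.
                  (\<Prod>j\<in>S. x j) * F (\<Prod>j\<in>{1..n+1} - S. x j))))"
  unfolding Rhs_def[symmetric]
proof
  assume H: "\<forall>\<alpha>::complex. F (\<alpha> ^ (n + 1)) =
            (\<Sum>i=1..n. of_nat ((n + 1) choose i) * (-1) ^ (n - i) * \<alpha> ^ (n + 1 - i) * F (\<alpha> ^ i))"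
  define \<Phi> where "\<Phi> x = F (\<Prod>j\<in>{1..n+1}. x j) - Rhs F n x" for x
  have "\<Phi> x = 0" for x
  proof (rule polar[where \<Phi>=\<Phi> and m="n+1"])
    fix x y :: "nat \<Rightarrow> complex" assume "\<forall>j\<in>{1..n+1}. x j = y j"
    then have "(\<Prod>j\<in>{1..n+1}. x j) = (\<Prod>j\<in>{1..n+1}. y j)" by (intro prod.cong) auto
    then show "\<Phi> x = \<Phi> y" unfolding \<Phi>_def using Rhs_cong[of n x y F] \<open>\<forall>j\<in>{1..n+1}. x j = y j\<close>
      by simp
  next
    fix x :: "nat \<Rightarrow> complex" and j a b assume j: "j \<in> {1..n+1}"
    show "\<Phi> (x(j:=a+b)) = \<Phi> (x(j:=a)) + \<Phi> (x(j:=b))"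
    proof -
      let ?P = "\<Prod>k\<in>{1..n+1}-{j}. x k"
      have pr: "(\<Prod>k\<in>{1..n+1}. (x(j:=v)) k) = v * ?P" for v
        using prod_upd[of "{1..n+1}" j v x] j by simp
      have Fadd: "F ((a+b) * ?P) = F (a * ?P) + F (b * ?P)"
        using assms(2) by (simp add: additive_fun_def distrib_right)
      show ?thesis unfolding \<Phi>_def Rhs_add[OF assms(2) j] pr Fadd by simp
    qed
  next
    fix x :: "nat \<Rightarrow> complex" and \<sigma> assume bij: "bij_betw \<sigma> {1..n+1} {1..n+1}"
    have "(\<Prod>j\<in>{1..n+1}. (x \<circ> \<sigma>) j) = (\<Prod>j\<in>{1..n+1}. x j)"
      using prod.reindex_bij_betw[OF bij, of x] by simp
    then show "\<Phi> (x \<circ> \<sigma>) = \<Phi> x" unfolding \<Phi>_def Rhs_sym[OF bij] by simp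
  next
    fix c
    show "\<Phi> (\<lambda>_. c) = 0" unfolding \<Phi>_def Rhs_diag[OF assms(1)] using H by simp
  qed
  then show "\<forall>x. F (\<Prod>j\<in>{1..n+1}. x j) = Rhs F n x" unfolding \<Phi>_def by simp
next
  assume H: "\<forall>x. F (\<Prod>j\<in>{1..n+1}. x j) = Rhs F n x"
  show "\<forall>\<alpha>::complex. F (\<alpha> ^ (n + 1)) =
            (\<Sum>i=1..n. of_nat ((n + 1) choose i) * (-1) ^ (n - i) * \<alpha> ^ (n + 1 - i) * F (\<alpha> ^ i))"
  proof
    fix \<alpha> :: complex
    show "F (\<alpha> ^ (n + 1)) =
            (\<Sum>i=1..n. of_nat ((n + 1) choose i) * (-1) ^ (n - i) * \<alpha> ^ (n + 1 - i) * F (\<alpha> ^ i))"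
      using H[rule_format, of "\<lambda>_. \<alpha>"] Rhs_diag[OF assms(1), of F \<alpha>] by simp
  qed
qed

end
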